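(* Let $n\ge2$ and let $Q\in\mathcal{Q}_n$ be meet-irreducible in $(\mathcal{Q}_n,\le)$; write $Q=Q(w)$ with $w\in S_n$. Then $Q$ is associative, i.e. $Q(i,Q(j,k))=Q(Q(i,j),k)$ for all $i,j,k\in L_n$, if and only if $w$ is a simple transposition $s_j$ (interchanging $j$ and $j+1$) for some $j\in[n-1]$.
   Context: Fix $n\ge2$, $L_n=\{0,\dots,n\}$. $\mathcal{Q}_n$ is the set of irreducible discrete quasi-copulas: maps $Q:L_n\times L_n\to L_n$ (onto) with $Q(i,0)=Q(0,i)=0$, $Q(i,n)=Q(n,i)=i$, non-decreasing in each argument, and $Q(i,j)+Q(i',j')\ge Q(i,j')+Q(i',j)$ whenever $i\le i'$, $j\le j'$ and one of $i,i',j,j'$ lies in $\{0,n\}$; it is ordered by $P\le Q$ iff $P(i,j)\le Q(i,j)$ for all $i,j$. An element $z$ of a finite poset is meet-irreducible if it is not the maximum and $z=x\wedge y$ implies $z=x$ or $z=y$. It is known that every meet-irreducible element of $\mathcal{Q}_n$ is of the form $Q(w)$, $w\in S_n$, where $Q(w)(r,s)=|\{i\le r: w(i)\le s\}|$ (and $0$ if $r=0$ or $s=0$). *)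

theory Defs
  imports "HOL-Combinatorics.Combinatorics"
begin

text \<open>Discrete quasi-copulas on L_n = {0..n}, represented as functions nat => nat => nat
  that vanish outside L_n x L_n (canonical representative).\<close>

definition irr_quasi_copula :: "nat \<Rightarrow> (nat \<Rightarrow> nat \<Rightarrow> nat) \<Rightarrow> bool" where
  "irr_quasi_copula n Q \<longleftrightarrow>
     (\<forall>i j. (i > n \<or> j > n) \<longrightarrow> Q i j = 0) \<and>
     (\<forall>i\<in>{0..n}. \<forall>j\<in>{0..n}. Q i j \<in> {0..n}) \<and>
     (\<lambda>(i,j). Q i j) ` ({0..n} \<times> {0..n}) = {0..n} \<and>
     (\<forall>i\<in>{0..n}. Q i 0 = 0 \<and> Q 0 i = 0 \<and> Q i n = i \<and> Q n i = i) \<and>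
     (\<forall>i\<in>{0..n}. \<forall>i'\<in>{0..n}. \<forall>j\<in>{0..n}. i \<le> i' \<longrightarrow> Q i j \<le> Q i' j \<and> Q j i \<le> Q j i') \<and>
     (\<forall>i\<in>{0..n}. \<forall>i'\<in>{0..n}. \<forall>j\<in>{0..n}. \<forall>j'\<in>{0..n}.
        i \<le> i' \<and> j \<le> j' \<and> ({i, i', j, j'} \<inter> {0, n} \<noteq> {}) \<longrightarrow>
        Q i j + Q i' j' \<ge> Q i j' + Q i' j)"

definition Qn :: "nat \<Rightarrow> (nat \<Rightarrow> nat \<Rightarrow> nat) set" where
  "Qn n = {Q. irr_quasi_copula n Q}"

definition qc_le :: "nat \<Rightarrow> (nat \<Rightarrow> nat \<Rightarrow> nat) \<Rightarrow> (nat \<Rightarrow> nat \<Rightarrow> nat) \<Rightarrow> bool" where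
  "qc_le n P Q \<longleftrightarrow> (\<forall>i\<in>{0..n}. \<forall>j\<in>{0..n}. P i j \<le> Q i j)"

definition is_meet :: "nat \<Rightarrow> (nat \<Rightarrow> nat \<Rightarrow> nat) \<Rightarrow> (nat \<Rightarrow> nat \<Rightarrow> nat) \<Rightarrow> (nat \<Rightarrow> nat \<Rightarrow> nat) \<Rightarrow> bool" where
  "is_meet n x y z \<longleftrightarrow> z \<in> Qn n \<and> qc_le n z x \<and> qc_le n z y \<and>
     (\<forall>u\<in>Qn n. qc_le n u x \<and> qc_le n u y \<longrightarrow> qc_le n u z)"

definition meet_irreducible :: "nat \<Rightarrow> (nat \<Rightarrow> nat \<Rightarrow> nat) \<Rightarrow> bool" where
  "meet_irreducible n z \<longleftrightarrow> z \<in> Qn n \<and> \<not> (\<forall>P\<in>Qn n. qc_le n P z) \<and>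
     (\<forall>x\<in>Qn n. \<forall>y\<in>Qn n. is_meet n x y z \<longrightarrow> z = x \<or> z = y)"

definition Qw :: "nat \<Rightarrow> (nat \<Rightarrow> nat) \<Rightarrow> nat \<Rightarrow> nat \<Rightarrow> nat" where
  "Qw n w r s = (if r \<le> n \<and> s \<le> n \<and> r \<noteq> 0 \<and> s \<noteq> 0
                 then card {i \<in> {1..r}. w i \<le> s} else 0)"

definition qc_associative :: "nat \<Rightarrow> (nat \<Rightarrow> nat \<Rightarrow> nat) \<Rightarrow> bool" where
  "qc_associative n Q \<longleftrightarrow>
     (\<forall>i\<in>{0..n}. \<forall>j\<in>{0..n}. \<forall>k\<in>{0..n}. Q i (Q j k) = Q (Q i j) k)"

end

theory Submission
  imports Defs
begin

lemma Qw_eq: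
  assumes w: "w permutes {1..n}" and "r \<le> n" "s \<le> n"
  shows "Qw n w r s = card {x\<in>{1..r}. w x \<le> s}"
proof (cases "r = 0 \<or> s = 0")
  case True
  have "{x\<in>{1..r}. w x \<le> s} = {}"
  proof (cases "r = 0")
    case False
    with True have s0: "s = 0" by simp
    { fix x assume "x \<in> {1..r}" "w x \<le> s"
      then have "x \<in> {1..n}" using assms by auto
      then have "w x \<in> {1..n}" using permutes_in_image[OF w] by simp
      with s0 \<open>w x \<le> s\<close> have False by simp }
    then show ?thesis by blast
  qed simp
  then show ?thesis using True by (auto simp: Qw_def)
qed (use assms in \<open>auto simp: Qw_def\<close>)

lemma w_range: "w permutes {1..n} \<Longrightarrow> x \<in> {1..n} \<Longrightarrow> 1 \<le> w x \<and> w x \<le> n"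
  using permutes_in_image[of w "{1..n}" x] by auto

lemma card_le_s:
  assumes w: "w permutes {1..n}" and "s \<le> n"
  shows "card {x\<in>{1..n}. w x \<le> s} = s"
proof -
  have "inj_on w {x\<in>{1..n}. w x \<le> s}" using permutes_inj_on[OF w] .
  moreover have "w ` {x\<in>{1..n}. w x \<le> s} = {1..s}"
  proof
    show "w ` {x\<in>{1..n}. w x \<le> s} \<subseteq> {1..s}" using w_range[OF w] by auto
    show "{1..s} \<subseteq> w ` {x\<in>{1..n}. w x \<le> s}"
    proof
      fix y assume y: "y \<in> {1..s}"
      then have "y \<in> w ` {1..n}" using permutes_image[OF w] assms by auto
      then obtain x where "x \<in> {1..n}" "y = w x" by auto
      then show "y \<in> w ` {x\<in>{1..n}. w x \<le> s}" using y by auto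
    qed
  qed
  ultimately have "card {x\<in>{1..n}. w x \<le> s} = card {1..s}" by (metis card_image)
  then show ?thesis by simp
qed

lemma card_split:
  assumes "i \<le> i'"
  shows "card {x\<in>{1..i'}. w x \<le> s} = card {x\<in>{1..i}. w x \<le> s} + card {x\<in>{Suc i..i'}. w x \<le> s}"
proof -
  have "{x\<in>{1..i'}. w x \<le> s} = {x\<in>{1..i}. w x \<le> s} \<union> {x\<in>{Suc i..i'}. w x \<le> s}"
    using assms by auto
  moreover have "{x\<in>{1..i}. w x \<le> s} \<inter> {x\<in>{Suc i..i'}. w x \<le> s} = {}" by auto
  ultimately show ?thesis by (simp add: card_Un_disjoint)
qed

lemma Qw_in_Qn:
  assumes w: "w permutes {1..n}"
  shows "Qw n w \<in> Qn n"
proof -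
  let ?Q = "Qw n w"
  have E: "\<And>r s. r \<le> n \<Longrightarrow> s \<le> n \<Longrightarrow> ?Q r s = card {x\<in>{1..r}. w x \<le> s}"
    using Qw_eq[OF w] by blast
  have bnd: "\<And>r s. r \<le> n \<Longrightarrow> s \<le> n \<Longrightarrow> ?Q r s \<le> r"
  proof -
    fix r s assume "r \<le> n" "s \<le> n"
    have "card {x\<in>{1..r}. w x \<le> s} \<le> card {1..r}" by (rule card_mono) auto
    then show "?Q r s \<le> r" using E \<open>r \<le> n\<close> \<open>s \<le> n\<close> by simp
  qed
  have rn: "\<And>r. r \<le> n \<Longrightarrow> ?Q r n = r"
  proof -
    fix r assume "r \<le> n"
    have "{x\<in>{1..r}. w x \<le> n} = {1..r}" using w_range[OF w] \<open>r \<le> n\<close> by auto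
    then show "?Q r n = r" using E \<open>r \<le> n\<close> by simp
  qed
  have nr: "\<And>r. r \<le> n \<Longrightarrow> ?Q n r = r" using E card_le_s[OF w] by simp
  have monoL: "\<And>i i' j. i \<le> i' \<Longrightarrow> i' \<le> n \<Longrightarrow> j \<le> n \<Longrightarrow> ?Q i j \<le> ?Q i' j"
  proof -
    fix i i' j assume a: "i \<le> i'" "i' \<le> n" "j \<le> n"
    then show "?Q i j \<le> ?Q i' j" using E[of i j] E[of i' j] card_split[OF a(1), of w j] by simp
  qed
  have monoR: "\<And>i i' j. i \<le> i' \<Longrightarrow> i' \<le> n \<Longrightarrow> j \<le> n \<Longrightarrow> ?Q j i \<le> ?Q j i'"
  proof -
    fix i i' j assume "i \<le> i'" "i' \<le> n" "j \<le> n"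
    have "card {x\<in>{1..j}. w x \<le> i} \<le> card {x\<in>{1..j}. w x \<le> i'}"
      by (rule card_mono) (use \<open>i \<le> i'\<close> in auto)
    then show "?Q j i \<le> ?Q j i'" using E \<open>i \<le> i'\<close> \<open>i' \<le> n\<close> \<open>j \<le> n\<close> by simp
  qed
  have inc: "\<And>i i' j j'. i \<le> i' \<Longrightarrow> i' \<le> n \<Longrightarrow> j \<le> j' \<Longrightarrow> j' \<le> n \<Longrightarrow>
      ?Q i j + ?Q i' j' \<ge> ?Q i j' + ?Q i' j"
  proof -
    fix i i' j j' assume a: "i \<le> i'" "i' \<le> n" "j \<le> j'" "j' \<le> n"
    have "card {x\<in>{Suc i..i'}. w x \<le> j} \<le> card {x\<in>{Suc i..i'}. w x \<le> j'}"
      by (rule card_mono) (use a in auto)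
    then show "?Q i j + ?Q i' j' \<ge> ?Q i j' + ?Q i' j"
      using E a card_split[OF a(1), of w j] card_split[OF a(1), of w j'] by simp
  qed
  have img: "(\<lambda>(i,j). ?Q i j) ` ({0..n} \<times> {0..n}) = {0..n}"
  proof
    show "(\<lambda>(i,j). ?Q i j) ` ({0..n} \<times> {0..n}) \<subseteq> {0..n}"
      using bnd by fastforce
    show "{0..n} \<subseteq> (\<lambda>(i,j). ?Q i j) ` ({0..n} \<times> {0..n})"
    proof
      fix v assume "v \<in> {0..n}"
      then have "(v, n) \<in> {0..n} \<times> {0..n}" "v = (\<lambda>(i,j). ?Q i j) (v, n)" using rn by auto
      then show "v \<in> (\<lambda>(i,j). ?Q i j) ` ({0..n} \<times> {0..n})" by blast
    qed
  qed
  have z1: "\<forall>i j. (i > n \<or> j > n) \<longrightarrow> ?Q i j = 0" by (auto simp: Qw_def)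
  have z2: "\<forall>i\<in>{0..n}. \<forall>j\<in>{0..n}. ?Q i j \<in> {0..n}" using bnd by (meson atLeastAtMost_iff le0 le_trans)
  have z3: "\<forall>i\<in>{0..n}. ?Q i 0 = 0 \<and> ?Q 0 i = 0 \<and> ?Q i n = i \<and> ?Q n i = i"
    using rn nr by (auto simp: Qw_def)
  have z4: "\<forall>i\<in>{0..n}. \<forall>i'\<in>{0..n}. \<forall>j\<in>{0..n}. i \<le> i' \<longrightarrow> ?Q i j \<le> ?Q i' j \<and> ?Q j i \<le> ?Q j i'"
    using monoL monoR by simp
  have z5: "\<forall>i\<in>{0..n}. \<forall>i'\<in>{0..n}. \<forall>j\<in>{0..n}. \<forall>j'\<in>{0..n}.
        i \<le> i' \<and> j \<le> j' \<and> ({i, i', j, j'} \<inter> {0, n} \<noteq> {}) \<longrightarrow>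
        ?Q i j + ?Q i' j' \<ge> ?Q i j' + ?Q i' j"
    using inc by simp
  show ?thesis unfolding Qn_def irr_quasi_copula_def mem_Collect_eq
    using z1 z2 z3 z4 z5 img by blast
qed

lemma Qw_img:
  assumes w: "w permutes {1..n}" and "r \<le> n" "s \<le> n"
  shows "Qw n w r s = card (w ` {1..r} \<inter> {..s})"
proof -
  have "w ` {x\<in>{1..r}. w x \<le> s} = w ` {1..r} \<inter> {..s}" by auto
  moreover have "inj_on w {x\<in>{1..r}. w x \<le> s}" using permutes_inj_on[OF w] .
  ultimately show ?thesis using Qw_eq[OF assms] by (metis card_image)
qed

lemma card_ins:
  fixes X :: "nat set"
  assumes "a \<notin> X" "finite X"
  shows "card (insert a X \<inter> {..s}) = card (X \<inter> {..s}) + (if a \<le> s then 1 else 0)"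
proof (cases "a \<le> s")
  case True
  then have "insert a X \<inter> {..s} = insert a (X \<inter> {..s})" by auto
  then show ?thesis using assms True by simp
next
  case False
  then have "insert a X \<inter> {..s} = X \<inter> {..s}" by auto
  then show ?thesis using False by simp
qed

lemma swap_rows:
  assumes w: "w permutes {1..n}" and k: "1 \<le> k" "k < n" and d: "w (Suc k) < w k"
  defines "w' \<equiv> w \<circ> transpose k (Suc k)"
  shows "w' permutes {1..n}"
    and "\<And>r s. r \<le> n \<Longrightarrow> s \<le> n \<Longrightarrow> r \<noteq> k \<Longrightarrow> Qw n w' r s = Qw n w r s"
    and "\<And>s. s \<le> n \<Longrightarrow> Qw n w k s \<le> Qw n w' k s"
    and "Qw n w k (w (Suc k)) < Qw n w' k (w (Suc k))"
proof -
  show w': "w' permutes {1..n}" unfolding w'_def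
    by (rule permutes_compose[OF permutes_swap_id w]) (use k in auto)
  show "Qw n w' r s = Qw n w r s" if "r \<le> n" "s \<le> n" "r \<noteq> k" for r s
  proof -
    have "transpose k (Suc k) ` {1..r} = {1..r}"
      by (rule transpose_image_eq) (use that k in auto)
    then have "w' ` {1..r} = w ` {1..r}" unfolding w'_def by (metis image_comp)
    then show ?thesis using Qw_img[OF w that(1,2)] Qw_img[OF w' that(1,2)] by simp
  qed
  have tk: "transpose k (Suc k) ` {1..k} = insert (Suc k) {1..k-1}"
    by (rule set_eqI) (use k in \<open>auto simp: in_transpose_image_iff transpose_def\<close>)
  have "w' ` {1..k} = insert (w (Suc k)) (w ` {1..k-1})" unfolding w'_def
    by (metis image_comp image_insert tk)
  moreover have "w ` {1..k} = insert (w k) (w ` {1..k-1})"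
  proof -
    have "{1..k} = insert k {1..k-1}" using k by auto
    then show ?thesis by simp
  qed
  moreover have "w (Suc k) \<notin> w ` {1..k-1}" "w k \<notin> w ` {1..k-1}"
  proof -
    have i: "\<And>x y. w x = w y \<Longrightarrow> x = y" using permutes_inj[OF w] unfolding inj_def by blast
    show "w (Suc k) \<notin> w ` {1..k-1}"
    proof
      assume "w (Suc k) \<in> w ` {1..k-1}"
      then obtain x where "x \<in> {1..k-1}" "w (Suc k) = w x" by blast
      then show False using i[of "Suc k" x] by auto
    qed
    show "w k \<notin> w ` {1..k-1}"
    proof
      assume "w k \<in> w ` {1..k-1}"
      then obtain x where "x \<in> {1..k-1}" "w k = w x" by blast
      then show False using i[of k x] by auto
    qed
  qed
  ultimately have C: "\<And>s. s \<le> n \<Longrightarrow> Qw n w' k s = card (w ` {1..k-1} \<inter> {..s}) + (if w (Suc k) \<le> s then 1 else 0)"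
    "\<And>s. s \<le> n \<Longrightarrow> Qw n w k s = card (w ` {1..k-1} \<inter> {..s}) + (if w k \<le> s then 1 else 0)"
    using Qw_img[OF w, of k] Qw_img[OF w', of k] k card_ins by auto
  show "Qw n w k s \<le> Qw n w' k s" if "s \<le> n" for s
    using C[OF that] d by auto
  have "w (Suc k) \<le> n" using w_range[OF w, of "Suc k"] k by auto
  then show "Qw n w k (w (Suc k)) < Qw n w' k (w (Suc k))"
    using C d by auto
qed

lemma gap:
  fixes f :: "nat \<Rightarrow> nat"
  assumes m: "\<forall>x. a \<le> x \<and> x < b \<longrightarrow> f x < f (Suc x)" and "a \<le> x" "x \<le> y" "y \<le> b"
  shows "f x + (y - x) \<le> f y"
  using assms(3,4)
proof (induction y)
  case 0
  then show ?case by simp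
next
  case (Suc y)
  show ?case
  proof (cases "x = Suc y")
    case False
    then have "x \<le> y" using Suc.prems by simp
    then have "f x + (y - x) \<le> f y" using Suc by simp
    moreover have "f y < f (Suc y)" using m \<open>x \<le> y\<close> \<open>a \<le> x\<close> Suc.prems by auto
    ultimately show ?thesis using \<open>x \<le> y\<close> by simp
  qed simp
qed

lemma two_descents:
  assumes mi: "meet_irreducible n (Qw n w)" and w: "w permutes {1..n}"
    and k1: "1 \<le> k1" "k1 < n" "w (Suc k1) < w k1"
    and k2: "1 \<le> k2" "k2 < n" "w (Suc k2) < w k2"
  shows "k1 = k2"
proof (rule ccontr)
  assume ne: "k1 \<noteq> k2"
  let ?Q = "Qw n w"
  define x where "x = Qw n (w \<circ> transpose k1 (Suc k1))"
  define y where "y = Qw n (w \<circ> transpose k2 (Suc k2))"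
  note A = swap_rows[OF w k1]
  note B = swap_rows[OF w k2]
  have xQ: "x \<in> Qn n" unfolding x_def by (rule Qw_in_Qn[OF A(1)])
  have yQ: "y \<in> Qn n" unfolding y_def by (rule Qw_in_Qn[OF B(1)])
  have QQ: "?Q \<in> Qn n" using mi by (simp add: meet_irreducible_def)
  have lx: "qc_le n ?Q x" unfolding qc_le_def x_def
  proof (intro ballI)
    fix i j assume "i \<in> {0..n}" "j \<in> {0..n}"
    then show "?Q i j \<le> Qw n (w \<circ> transpose k1 (Suc k1)) i j"
      using A(2)[of i j] A(3)[of j] by (cases "i = k1") auto
  qed
  have ly: "qc_le n ?Q y" unfolding qc_le_def y_def
  proof (intro ballI)
    fix i j assume "i \<in> {0..n}" "j \<in> {0..n}"
    then show "?Q i j \<le> Qw n (w \<circ> transpose k2 (Suc k2)) i j"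
      using B(2)[of i j] B(3)[of j] by (cases "i = k2") auto
  qed
  have glb: "\<forall>u\<in>Qn n. qc_le n u x \<and> qc_le n u y \<longrightarrow> qc_le n u ?Q"
  proof (intro ballI impI)
    fix u assume "u \<in> Qn n" "qc_le n u x \<and> qc_le n u y"
    then have ux: "\<And>i j. i \<in> {0..n} \<Longrightarrow> j \<in> {0..n} \<Longrightarrow> u i j \<le> x i j"
      and uy: "\<And>i j. i \<in> {0..n} \<Longrightarrow> j \<in> {0..n} \<Longrightarrow> u i j \<le> y i j"
      by (auto simp: qc_le_def)
    show "qc_le n u ?Q" unfolding qc_le_def
    proof (intro ballI)
      fix i j assume ij: "i \<in> {0..n}" "j \<in> {0..n}"
      show "u i j \<le> ?Q i j"
      proof (cases "i = k1")
        case True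
        then have "i \<noteq> k2" using ne by simp
        then show ?thesis using uy[OF ij] B(2)[of i j] ij unfolding y_def by auto
      next
        case False
        then show ?thesis using ux[OF ij] A(2)[of i j] ij unfolding x_def by auto
      qed
    qed
  qed
  have "is_meet n x y ?Q" unfolding is_meet_def using QQ lx ly glb by blast
  then have "?Q = x \<or> ?Q = y" using mi xQ yQ by (auto simp: meet_irreducible_def)
  then show False using A(4) B(4) unfolding x_def y_def by (metis less_irrefl)
qed

lemma no_descent:
  assumes mi: "meet_irreducible n (Qw n w)" and w: "w permutes {1..n}"
    and m: "\<forall>k. 1 \<le> k \<and> k < n \<longrightarrow> w k < w (Suc k)"
  shows False
proof -
  have fix1: "w x = x" if "x \<in> {1..n}" for x
  proof -
    have "w 1 + (x - 1) \<le> w x" using gap[OF m, of 1 x] that by auto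
    moreover have "w x + (n - x) \<le> w n" using gap[OF m, of x n] that by auto
    moreover have "1 \<le> w 1" "w n \<le> n" using w_range[OF w, of 1] w_range[OF w, of n] that by auto
    ultimately show ?thesis using that by auto
  qed
  have Qmin: "Qw n w i j = min i j" if "i \<le> n" "j \<le> n" for i j
  proof -
    have "{x\<in>{1..i}. w x \<le> j} = {1..min i j}" using fix1 that by auto
    then show ?thesis using Qw_eq[OF w that] by simp
  qed
  have "\<forall>P\<in>Qn n. qc_le n P (Qw n w)"
  proof (intro ballI)
    fix P assume "P \<in> Qn n"
    then have P: "irr_quasi_copula n P" by (simp add: Qn_def)
    show "qc_le n P (Qw n w)" unfolding qc_le_def
    proof (intro ballI)
      fix i j assume ij: "i \<in> {0..n}" "j \<in> {0..n}"
      have mono: "\<forall>i\<in>{0..n}. \<forall>i'\<in>{0..n}. \<forall>j\<in>{0..n}. i \<le> i' \<longrightarrow> P i j \<le> P i' j \<and> P j i \<le> P j i'"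
        using P unfolding irr_quasi_copula_def by blast
      have "P i j \<le> P i n" using mono ij by auto
      moreover have "P i j \<le> P n j" using mono ij by auto
      moreover have "P i n = i" "P n j = j" using P ij unfolding irr_quasi_copula_def by auto
      ultimately show "P i j \<le> Qw n w i j" using Qmin ij by auto
    qed
  qed
  then show False using mi by (simp add: meet_irreducible_def)
qed

lemma s_formula:
  assumes j: "1 \<le> j" "j < n" and "r \<le> n" "s \<le> n"
  shows "Qw n (transpose j (Suc j)) r s = min r s - (if r = j \<and> s = j then 1 else 0)"
proof -
  have w: "transpose j (Suc j) permutes {1..n}" by (rule permutes_swap_id) (use j in auto)
  note E = Qw_img[OF w assms(3,4)]
  show ?thesis
  proof (cases "r = j")
    case False
    have "transpose j (Suc j) ` {1..r} = {1..r}"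
      by (rule transpose_image_eq) (use False j in auto)
    moreover have "{1..r} \<inter> {..s} = {1..min r s}" by auto
    ultimately show ?thesis using E False by simp
  next
    case True
    have "transpose j (Suc j) ` {1..r} = insert (Suc j) {1..j-1}"
      by (rule set_eqI) (use j True in \<open>auto simp: in_transpose_image_iff transpose_def\<close>)
    then have "Qw n (transpose j (Suc j)) r s = card ({1..j-1} \<inter> {..s}) + (if Suc j \<le> s then 1 else 0)"
      using E card_ins[of "Suc j" "{1..j-1}" s] by simp
    moreover have "{1..j-1} \<inter> {..s} = {1..min (j-1) s}" by auto
    ultimately show ?thesis using True j by auto
  qed
qed

definition g :: "nat \<Rightarrow> nat \<Rightarrow> nat \<Rightarrow> nat" where
  "g j r s = min r s - (if r = j \<and> s = j then 1 else 0)"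
lemma g_cases: "1 \<le> j \<Longrightarrow> g j r s = (if r = j \<and> s = j then j - 1 else min r s)"
  by (simp add: g_def)
lemma g_assoc: "1 \<le> j \<Longrightarrow> g j a (g j b c) = g j (g j a b) c"
  unfolding g_cases by (simp add: min_def; arith)

lemma s_assoc:
  assumes j: "1 \<le> j" "j < n"
  shows "qc_associative n (Qw n (transpose j (Suc j)))"
  unfolding qc_associative_def
proof (intro ballI)
  fix a b c assume abc: "a \<in> {0..n}" "b \<in> {0..n}" "c \<in> {0..n}"
  let ?Q = "Qw n (transpose j (Suc j))"
  have F: "\<And>r s. r \<le> n \<Longrightarrow> s \<le> n \<Longrightarrow> ?Q r s = g j r s"
    using s_formula[OF j] unfolding g_def by blast
  have le: "\<And>r s. r \<le> n \<Longrightarrow> g j r s \<le> n" unfolding g_def by linarith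
  have "?Q a (?Q b c) = g j a (g j b c)" using abc F le by simp
  also have "\<dots> = g j (g j a b) c" by (rule g_assoc[OF j(1)])
  also have "\<dots> = ?Q (?Q a b) c" using abc F le by simp
  finally show "?Q a (?Q b c) = ?Q (?Q a b) c" .
qed

lemma forward:
  assumes n: "n \<ge> 2" and mi: "meet_irreducible n (Qw n w)" and w: "w permutes {1..n}"
    and assoc: "qc_associative n (Qw n w)"
  shows "\<exists>j\<in>{1..n-1}. w = transpose j (j + 1)"
proof -
  let ?Q = "Qw n w"
  have inj: "\<And>x y. w x = w y \<Longrightarrow> x = y" using permutes_inj[OF w] unfolding inj_def by blast
  have rng: "\<And>x. x \<in> {1..n} \<Longrightarrow> 1 \<le> w x \<and> w x \<le> n" using w_range[OF w] by blast
  have A: "\<And>a b c. a \<le> n \<Longrightarrow> b \<le> n \<Longrightarrow> c \<le> n \<Longrightarrow> ?Q a (?Q b c) = ?Q (?Q a b) c"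
    using assoc unfolding qc_associative_def by auto
  note E = Qw_eq[OF w]
  obtain k where k: "1 \<le> k" "k < n" "w (Suc k) < w k"
  proof (rule ccontr)
    assume "\<not> thesis"
    with that have "\<forall>k. 1 \<le> k \<and> k < n \<longrightarrow> w k < w (Suc k)"
      by (metis inj linorder_neqE_nat n_not_Suc_n)
    then show False using no_descent[OF mi w] by blast
  qed
  have single: "\<And>x. 1 \<le> x \<Longrightarrow> x < n \<Longrightarrow> x \<noteq> k \<Longrightarrow> w x < w (Suc x)"
  proof -
    fix x assume x: "1 \<le> x" "x < n" "x \<noteq> k"
    show "w x < w (Suc x)"
    proof (rule ccontr)
      assume "\<not> w x < w (Suc x)"
      moreover have "w x \<noteq> w (Suc x)" using inj by (metis n_not_Suc_n)
      ultimately have "w (Suc x) < w x" by simp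
      then have "x = k" using two_descents[OF mi w x(1,2) _ k] by blast
      then show False using x by simp
    qed
  qed
  have m1: "\<forall>x. 1 \<le> x \<and> x < k \<longrightarrow> w x < w (Suc x)" using single k by auto
  have m2: "\<forall>x. Suc k \<le> x \<and> x < n \<longrightarrow> w x < w (Suc x)" using single k by auto
  define p where "p = w (Suc k)"
  define q where "q = w k"
  have pr: "1 \<le> p" "p \<le> n" using rng[of "Suc k"] k unfolding p_def by auto
  have qr: "1 \<le> q" "q \<le> n" using rng[of k] k unfolding q_def by auto
  have pq: "p < q" using k unfolding p_def q_def by simp
  show ?thesis
  proof (cases "Suc k < q")
    case True
    have S1: "{x\<in>{1..Suc k}. w x \<le> p} = {x\<in>{1..n}. w x \<le> p}"
    proof
      show "{x\<in>{1..Suc k}. w x \<le> p} \<subseteq> {x\<in>{1..n}. w x \<le> p}" using k by auto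
      show "{x\<in>{1..n}. w x \<le> p} \<subseteq> {x\<in>{1..Suc k}. w x \<le> p}"
      proof
        fix x assume x: "x \<in> {x\<in>{1..n}. w x \<le> p}"
        show "x \<in> {x\<in>{1..Suc k}. w x \<le> p}"
        proof (rule ccontr)
          assume "x \<notin> {x\<in>{1..Suc k}. w x \<le> p}"
          then have "Suc k < x" using x by auto
          then have "w (Suc k) + (x - Suc k) \<le> w x" using gap[OF m2, of "Suc k" x] x by auto
          then show False using x \<open>Suc k < x\<close> unfolding p_def by auto
        qed
      qed
    qed
    have Q1: "?Q (Suc k) p = p" using E[of "Suc k" p] k pr S1 card_le_s[OF w pr(2)] by simp
    define m where "m = ?Q (Suc k) (Suc k)"
    have "{x\<in>{1..Suc k}. w x \<le> Suc k} \<subseteq> {1..Suc k} - {k}" using True unfolding q_def by auto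
    then have "card {x\<in>{1..Suc k}. w x \<le> Suc k} \<le> card ({1..Suc k} - {k})" by (intro card_mono) auto
    then have mk: "m \<le> k" unfolding m_def using E[of "Suc k" "Suc k"] k by simp
    have "{x\<in>{1..m}. w x \<le> p} \<subseteq> {x\<in>{1..n}. w x \<le> p} - {Suc k}" using mk k by auto
    then have "card {x\<in>{1..m}. w x \<le> p} \<le> card ({x\<in>{1..n}. w x \<le> p} - {Suc k})" by (intro card_mono) auto
    also have "\<dots> = p - 1"
      using card_le_s[OF w pr(2)] k unfolding p_def by (subst card_Diff_singleton) auto
    finally have "?Q m p < p" using E[of m p] mk k pr by simp
    moreover have "?Q (Suc k) (?Q (Suc k) p) = ?Q (?Q (Suc k) (Suc k)) p" using A[of "Suc k" "Suc k" p] k pr by simp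
    ultimately show ?thesis using Q1 unfolding m_def by simp
  next
    case False
    have bq: "\<And>x. 1 \<le> x \<Longrightarrow> x \<le> k \<Longrightarrow> w x + (k - x) \<le> q"
      unfolding q_def using gap[OF m1] by blast
    have img: "w ` {1..k} = {1..Suc k} - {p}"
    proof (rule card_subset_eq)
      show "finite ({1..Suc k} - {p})" by simp
      show "w ` {1..k} \<subseteq> {1..Suc k} - {p}"
      proof
        fix y assume "y \<in> w ` {1..k}"
        then obtain x where x: "x \<in> {1..k}" "y = w x" by blast
        have "w x \<noteq> p" unfolding p_def using inj[of x "Suc k"] x by auto
        then show "y \<in> {1..Suc k} - {p}" using x bq[of x] rng[of x] k False by auto
      qed
      have "card (w ` {1..k}) = k" using card_image[OF permutes_inj_on[OF w, of "{1..k}"]] by simp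
      moreover have "card ({1..Suc k} - {p}) = k" using pr pq False by (subst card_Diff_singleton) auto
      ultimately show "card (w ` {1..k}) = card ({1..Suc k} - {p})" by simp
    qed
    show ?thesis
    proof (cases "p < k")
      case True
      have k2: "2 \<le> k" using True pr by simp
      have "?Q k k = card (({1..Suc k} - {p}) \<inter> {..k})" using Qw_img[OF w, of k k] img k by simp
      also have "({1..Suc k} - {p}) \<inter> {..k} = {1..k} - {p}" by auto
      also have "card ({1..k} - {p}) = k - 1" using True pr by (subst card_Diff_singleton) auto
      finally have Qkk: "?Q k k = k - 1" .
      have "?Q k (k-1) = card (({1..Suc k} - {p}) \<inter> {..k-1})" using Qw_img[OF w, of k "k-1"] img k by simp
      also have "({1..Suc k} - {p}) \<inter> {..k-1} = {1..k-1} - {p}" by auto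
      also have "card ({1..k-1} - {p}) = k - 2" using True pr by (subst card_Diff_singleton) auto
      finally have Qk1: "?Q k (k-1) = k - 2" .
      have "{x\<in>{1..k-1}. w x \<le> k} = {1..k-1}"
      proof -
        have "\<And>x. 1 \<le> x \<Longrightarrow> x \<le> k - 1 \<Longrightarrow> w x \<le> k" using bq False by fastforce
        then show ?thesis by auto
      qed
      then have Q1k: "?Q (k-1) k = k - 1" using E[of "k-1" k] k by simp
      have "?Q k (?Q k k) = ?Q (?Q k k) k" using A[of k k k] k by simp
      then show ?thesis using Qkk Qk1 Q1k k2 by simp
    next
      case pk: False
      have p: "p = k" using pk pq False by simp
      have q: "q = Suc k" using pk pq False by simp
      have "w = transpose k (Suc k)"
      proof
        fix x
        show "w x = transpose k (Suc k) x"
        proof (cases "x \<in> {1..n}")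
          case out: False
          then have "x \<noteq> k" "x \<noteq> Suc k" using k by auto
          then show ?thesis using permutes_not_in[OF w out] by simp
        next
          case inn: True
          consider "x < k" | "x = k" | "x = Suc k" | "Suc k < x" by linarith
          then show ?thesis
          proof cases
            case 1
            have "k - 1 \<in> {1..k}" using 1 inn by auto
            then have "w (k-1) \<in> w ` {1..k}" by blast
            then have "w (k-1) \<in> {1..Suc k} - {p}" using img by simp
            moreover have "w (k-1) < w k"
            proof -
              have "1 \<le> k-1 \<and> k-1 < k" using 1 inn by auto
              then have "w (k-1) < w (Suc (k-1))" using m1 by blast
              moreover have "Suc (k-1) = k" using 1 by simp
              ultimately show ?thesis by simp
            qed
            ultimately have wk1: "w (k-1) \<le> k - 1" using p q unfolding q_def by auto
            have "w x + (k - 1 - x) \<le> w (k-1)" using gap[OF m1, of x "k-1"] 1 inn by auto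
            moreover have "w 1 + (x - 1) \<le> w x" using gap[OF m1, of 1 x] 1 inn by auto
            moreover have "1 \<le> w 1" using rng[of 1] k by auto
            ultimately have "w x = x" using wk1 1 by linarith
            then show ?thesis using 1 by simp
          next
            case 2
            then show ?thesis using q unfolding q_def by simp
          next
            case 3
            then show ?thesis using p unfolding p_def by simp
          next
            case 4
            have "w (Suc k) < w (Suc (Suc k))" using m2 4 inn by auto
            moreover have "w (Suc (Suc k)) \<noteq> w k" using inj[of "Suc (Suc k)" k] by auto
            ultimately have w2: "Suc (Suc k) \<le> w (Suc (Suc k))" using p q unfolding p_def q_def by auto
            have "w (Suc (Suc k)) + (x - Suc (Suc k)) \<le> w x" using gap[OF m2, of "Suc (Suc k)" x] 4 inn by auto
            moreover have "w x + (n - x) \<le> w n" using gap[OF m2, of x n] 4 inn by auto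
            moreover have "w n \<le> n" using rng[of n] k by auto
            ultimately have "w x = x" using w2 4 inn by auto
            then show ?thesis using 4 by simp
          qed
        qed
      qed
      then show ?thesis using k by auto
    qed
  qed
qed

theorem mainTheorem8:
  fixes n :: nat and Q :: "nat \<Rightarrow> nat \<Rightarrow> nat" and w :: "nat \<Rightarrow> nat"
  assumes "n \<ge> 2"
    and "meet_irreducible n Q"
    and "w permutes {1..n}"
    and "Q = Qw n w"
  shows "qc_associative n Q \<longleftrightarrow> (\<exists>j\<in>{1..n-1}. w = transpose j (j + 1))"
proof
  assume "qc_associative n Q"
  then show "\<exists>j\<in>{1..n-1}. w = transpose j (j + 1)"
    using forward[OF assms(1) _ assms(3)] assms(2,4) by blast
next
  assume "\<exists>j\<in>{1..n-1}. w = transpose j (j + 1)"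
  then obtain j where j: "1 \<le> j" "j < n" "w = transpose j (Suc j)" by auto
  then show "qc_associative n Q" using s_assoc[OF j(1,2)] assms(4) by simp
qed

end
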